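(* Let $p$ be the largest eigenvalue of $\boldsymbol{\mathcal T}=\mathbb E_{\mathcal G\in\mathbb G}[\boldsymbol{\mathcal G}_{\rm tr}\otimes\tilde{\boldsymbol{\mathcal G}}]$, where $\boldsymbol{\mathcal G}_{\rm tr}=\boldsymbol{\mathcal G}\boldsymbol\Pi_{\rm tr}$, and define for $m\ge1$ $$\boldsymbol{\mathcal A}_m=p^{-m}\,\mathbb E\big[(\boldsymbol{\mathcal G}_{{\rm tr},m:1})^\dagger\boldsymbol\Pi_{\rm tr}\tilde{\boldsymbol{\mathcal G}}_{m:1}\big],\qquad \boldsymbol{\mathcal B}_m=p^{-m}\,\mathbb E\big[\tilde{\boldsymbol{\mathcal G}}_{m:1}\boldsymbol\Pi_{\rm tr}(\boldsymbol{\mathcal G}_{{\rm tr},m:1})^\dagger\big],$$ with $\boldsymbol{\mathcal A}_\infty=\lim_{m\to\infty}\boldsymbol{\mathcal A}_m$, $\boldsymbol{\mathcal B}_\infty=\lim_{m\to\infty}\boldsymbol{\mathcal B}_m$. Then $${\rm vec}^\dagger(\boldsymbol{\mathcal A}_\infty^T)\,\boldsymbol{\mathcal T}=p\,{\rm vec}^\dagger(\boldsymbol{\mathcal A}_\infty^T),\qquad \boldsymbol{\mathcal T}\,{\rm vec}(\boldsymbol{\mathcal B}_\infty)=p\,{\rm vec}(\boldsymbol{\mathcal B}_\infty).$$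
   Context: $\mathbb G$ is a finite group of unitary channels on a $d$-dimensional system forming a unitary 2-design (as in randomized benchmarking), and $\tilde{\mathbb G}=\{\tilde{\mathcal G}\}$ is a noisy implementation (CPTP maps, possibly gate-dependent) that is a small perturbation of $\mathbb G$, so that the spectrum of $\boldsymbol{\mathcal T}$ is a small perturbation of $\{1,0,0,\dots\}$. Bold symbols are real Liouville matrices (with respect to an orthonormal Hermitian operator basis) of linear maps; $\Pi_{\rm tr}(\rho)=\rho-\mathbb I\operatorname{tr}\rho/d$. Expectations are over independent uniformly random $\mathcal G_1,\dots,\mathcal G_m\in\mathbb G$; $\boldsymbol{\mathcal G}_{m:1}=\boldsymbol{\mathcal G}_m\cdots\boldsymbol{\mathcal G}_1$, $\boldsymbol{\mathcal G}_{{\rm tr},m:1}=\boldsymbol{\mathcal G}_{{\rm tr},m}\cdots\boldsymbol{\mathcal G}_{{\rm tr},1}$, $\tilde{\boldsymbol{\mathcal G}}_{m:1}=\tilde{\boldsymbol{\mathcal G}}_m\cdots\tilde{\boldsymbol{\mathcal G}}_1$. For a matrix $A=\sum_{j,k}a_{jk}e_je_k^T$, ${\rm vec}(A)=\sum_{j,k}a_{jk}e_k\otimes e_j$, and ${\rm vec}^\dagger$ is its conjugate transpose. *)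

theory Defs
  imports "Jordan_Normal_Form.Char_Poly"
begin

definition mtrace :: "'a::comm_monoid_add mat \<Rightarrow> 'a" where
  "mtrace A = (\<Sum>i<dim_row A. A $$ (i,i))"

definition cadj :: "complex mat \<Rightarrow> complex mat" where
  "cadj A = mat (dim_col A) (dim_row A) (\<lambda>(i,j). cnj (A $$ (j,i)))"

definition hermitian :: "complex mat \<Rightarrow> bool" where
  "hermitian A \<longleftrightarrow> cadj A = A"

definition unitary :: "nat \<Rightarrow> complex mat \<Rightarrow> bool" where
  "unitary d U \<longleftrightarrow> U \<in> carrier_mat d d \<and> U * cadj U = 1\<^sub>m d \<and> cadj U * U = 1\<^sub>m d"

definition kron :: "'a::times mat \<Rightarrow> 'a mat \<Rightarrow> 'a mat" where
  "kron A B = mat (dim_row A * dim_row B) (dim_col A * dim_col B)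
     (\<lambda>(i,j). A $$ (i div dim_row B, j div dim_col B) * B $$ (i mod dim_row B, j mod dim_col B))"

text \<open>Column-stacking vectorisation as a (rows*cols) x 1 matrix:
  vec(A) = sum_{j,k} a_{jk} e_k \<otimes> e_j, i.e. entry k*rows + j is a_{jk}.\<close>
definition vecm :: "'a mat \<Rightarrow> 'a mat" where
  "vecm A = mat (dim_row A * dim_col A) 1 (\<lambda>(i,_). A $$ (i mod dim_row A, i div dim_row A))"

text \<open>vec^\<dagger> of a real matrix: conjugate transpose of vec (a row vector).\<close>
definition vecm_dag :: "real mat \<Rightarrow> real mat" where
  "vecm_dag A = transpose_mat (vecm A)"

definition msum :: "nat \<Rightarrow> ('b \<Rightarrow> real mat) \<Rightarrow> 'b set \<Rightarrow> real mat" where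
  "msum D f S = mat D D (\<lambda>(i,j). \<Sum>s\<in>S. f s $$ (i,j))"

definition herm_onb :: "nat \<Rightarrow> (nat \<Rightarrow> complex mat) \<Rightarrow> bool" where
  "herm_onb d B \<longleftrightarrow> (\<forall>i < d*d. B i \<in> carrier_mat d d \<and> hermitian (B i)) \<and>
     (\<forall>i < d*d. \<forall>j < d*d. mtrace (cadj (B i) * B j) = (if i = j then 1 else 0))"

definition liou :: "nat \<Rightarrow> (nat \<Rightarrow> complex mat) \<Rightarrow> (complex mat \<Rightarrow> complex mat) \<Rightarrow> real mat" where
  "liou d B \<Phi> = mat (d*d) (d*d) (\<lambda>(i,j). Re (mtrace (cadj (B i) * \<Phi> (B j))))"

definition unitary_channel :: "complex mat \<Rightarrow> complex mat \<Rightarrow> complex mat" where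
  "unitary_channel U = (\<lambda>\<rho>. U * \<rho> * cadj U)"

definition Pi_tr_map :: "nat \<Rightarrow> complex mat \<Rightarrow> complex mat" where
  "Pi_tr_map d = (\<lambda>\<rho>. \<rho> - (mtrace \<rho> / of_nat d) \<cdot>\<^sub>m 1\<^sub>m d)"

definition psd :: "complex mat \<Rightarrow> bool" where
  "psd A \<longleftrightarrow> hermitian A \<and> (\<exists>n. A \<in> carrier_mat n n \<and>
     (\<forall>v \<in> carrier_vec n. Re (conjugate v \<bullet> (A *\<^sub>v v)) \<ge> 0))"

text \<open>Choi matrix sum_{ij} E_ij \<otimes> Phi(E_ij).\<close>
definition choi :: "nat \<Rightarrow> (complex mat \<Rightarrow> complex mat) \<Rightarrow> complex mat" where
  "choi d \<Phi> = mat (d*d) (d*d)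
     (\<lambda>(a,b). \<Phi> (mat d d (\<lambda>(k,l). if (k,l) = (a div d, b div d) then 1 else 0)) $$ (a mod d, b mod d))"

definition cptp :: "nat \<Rightarrow> (complex mat \<Rightarrow> complex mat) \<Rightarrow> bool" where
  "cptp d \<Phi> \<longleftrightarrow>
     (\<forall>X \<in> carrier_mat d d. \<Phi> X \<in> carrier_mat d d \<and> mtrace (\<Phi> X) = mtrace X) \<and>
     (\<forall>X \<in> carrier_mat d d. \<forall>Y \<in> carrier_mat d d. \<forall>a b. \<Phi> (a \<cdot>\<^sub>m X + b \<cdot>\<^sub>m Y) = a \<cdot>\<^sub>m \<Phi> X + b \<cdot>\<^sub>m \<Phi> Y) \<and>
     psd (choi d \<Phi>)"

definition unitary_channel_group :: "nat \<Rightarrow> (nat \<Rightarrow> complex mat) \<Rightarrow> real mat set \<Rightarrow> bool" where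
  "unitary_channel_group d B G \<longleftrightarrow> finite G \<and> G \<noteq> {} \<and>
     (\<forall>g\<in>G. \<exists>U. unitary d U \<and> g = liou d B (unitary_channel U)) \<and>
     (\<forall>g\<in>G. \<forall>h\<in>G. g * h \<in> G)"

text \<open>A unitary implementing the channel g (well defined up to a global phase).\<close>
definition unitary_of :: "nat \<Rightarrow> (nat \<Rightarrow> complex mat) \<Rightarrow> real mat \<Rightarrow> complex mat" where
  "unitary_of d B g = (SOME U. unitary d U \<and> g = liou d B (unitary_channel U))"

definition swap_op :: "nat \<Rightarrow> complex mat" where
  "swap_op d = mat (d*d) (d*d) (\<lambda>(a,b). if a div d = b mod d \<and> a mod d = b div d then 1 else 0)"

text \<open>Unitary 2-design: the uniform average of U\<otimes>U X (U\<otimes>U)^\<dagger> over the group equals the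
  Haar average, which is given by the standard closed (Weingarten) formula.\<close>
definition unitary_2_design :: "nat \<Rightarrow> (nat \<Rightarrow> complex mat) \<Rightarrow> real mat set \<Rightarrow> bool" where
  "unitary_2_design d B G \<longleftrightarrow>
     (\<forall>X \<in> carrier_mat (d*d) (d*d).
        (1 / of_nat (card G)) \<cdot>\<^sub>m
          mat (d*d) (d*d) (\<lambda>(i,j). \<Sum>g\<in>G.
             (let U = unitary_of d B g in kron U U * X * cadj (kron U U)) $$ (i,j))
        = ((mtrace X - mtrace (swap_op d * X) / of_nat d) / (of_nat d ^ 2 - 1)) \<cdot>\<^sub>m 1\<^sub>m (d*d)
          + ((mtrace (swap_op d * X) - mtrace X / of_nat d) / (of_nat d ^ 2 - 1)) \<cdot>\<^sub>m swap_op d)"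

text \<open>seq_prod f [g1,...,gm] = f gm * ... * f g1.\<close>
fun seq_prod :: "nat \<Rightarrow> ('g \<Rightarrow> real mat) \<Rightarrow> 'g list \<Rightarrow> real mat" where
  "seq_prod D f [] = 1\<^sub>m D"
| "seq_prod D f (g # gs) = seq_prod D f gs * f g"

definition seqs :: "'g set \<Rightarrow> nat \<Rightarrow> 'g list set" where
  "seqs G m = {gs. set gs \<subseteq> G \<and> length gs = m}"

definition expect_seq :: "nat \<Rightarrow> 'g set \<Rightarrow> nat \<Rightarrow> ('g list \<Rightarrow> real mat) \<Rightarrow> real mat" where
  "expect_seq D G m F = (1 / real (card G) ^ m) \<cdot>\<^sub>m msum D F (seqs G m)"


definition Pi_tr :: "nat \<Rightarrow> (nat \<Rightarrow> complex mat) \<Rightarrow> real mat" where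
  "Pi_tr d B = liou d B (Pi_tr_map d)"

definition T_op :: "nat \<Rightarrow> (nat \<Rightarrow> complex mat) \<Rightarrow> real mat set \<Rightarrow> (real mat \<Rightarrow> real mat) \<Rightarrow> real mat" where
  "T_op d B G Gt = (1 / real (card G)) \<cdot>\<^sub>m
     msum ((d*d)*(d*d)) (\<lambda>g. kron (g * Pi_tr d B) (Gt g)) G"

definition A_m :: "nat \<Rightarrow> (nat \<Rightarrow> complex mat) \<Rightarrow> real mat set \<Rightarrow> (real mat \<Rightarrow> real mat) \<Rightarrow> real \<Rightarrow> nat \<Rightarrow> real mat" where
  "A_m d B G Gt p m = (1 / p ^ m) \<cdot>\<^sub>m expect_seq (d*d) G m
     (\<lambda>gs. transpose_mat (seq_prod (d*d) (\<lambda>g. g * Pi_tr d B) gs) * Pi_tr d B * seq_prod (d*d) Gt gs)"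

definition B_m :: "nat \<Rightarrow> (nat \<Rightarrow> complex mat) \<Rightarrow> real mat set \<Rightarrow> (real mat \<Rightarrow> real mat) \<Rightarrow> real \<Rightarrow> nat \<Rightarrow> real mat" where
  "B_m d B G Gt p m = (1 / p ^ m) \<cdot>\<^sub>m expect_seq (d*d) G m
     (\<lambda>gs. seq_prod (d*d) Gt gs * Pi_tr d B * transpose_mat (seq_prod (d*d) (\<lambda>g. g * Pi_tr d B) gs))"

definition mat_tendsto :: "nat \<Rightarrow> (nat \<Rightarrow> real mat) \<Rightarrow> real mat \<Rightarrow> bool" where
  "mat_tendsto n X L \<longleftrightarrow> L \<in> carrier_mat n n \<and>
     (\<forall>i<n. \<forall>j<n. (\<lambda>m. X m $$ (i,j)) \<longlonglongrightarrow> L $$ (i,j))"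

end

theory Submission
  imports Defs
begin

lemma tri_entry:
  assumes "P \<in> carrier_mat D D" "Y \<in> carrier_mat D D" "Q \<in> carrier_mat D D" "i < D" "j < D"
  shows "(P * Y * Q) $$ (i,j) = (\<Sum>a<D. \<Sum>b<D. P $$ (i,a) * Y $$ (a,b) * Q $$ (b,j))"
proof -
  have "(P * Y * Q) $$ (i,j) = (\<Sum>b<D. (\<Sum>a<D. P $$ (i,a) * Y $$ (a,b)) * Q $$ (b,j))"
    using assms by (simp add: scalar_prod_def lessThan_atLeast0 del: assoc_mult_mat)
  also have "\<dots> = (\<Sum>b<D. \<Sum>a<D. P $$ (i,a) * Y $$ (a,b) * Q $$ (b,j))"
    by (simp add: sum_distrib_right)
  also have "\<dots> = (\<Sum>a<D. \<Sum>b<D. P $$ (i,a) * Y $$ (a,b) * Q $$ (b,j))"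
    by (rule sum.swap)
  finally show ?thesis .
qed

lemma fix_rec:
  fixes X :: "nat \<Rightarrow> real mat" and P Q :: "'g \<Rightarrow> nat \<Rightarrow> nat \<Rightarrow> real"
  assumes rec: "\<And>m i j. i<D \<Longrightarrow> j<D \<Longrightarrow> X (Suc m) $$ (i,j) =
       c * (\<Sum>g\<in>G. \<Sum>a<D. \<Sum>b<D. P g i a * X m $$ (a,b) * Q g b j)"
    and lim: "\<forall>i<D. \<forall>j<D. (\<lambda>m. X m $$ (i,j)) \<longlonglongrightarrow> L $$ (i,j)"
    and ij: "i<D" "j<D"
  shows "L $$ (i,j) = c * (\<Sum>g\<in>G. \<Sum>a<D. \<Sum>b<D. P g i a * L $$ (a,b) * Q g b j)"
proof -
  have "(\<lambda>m. X (Suc m) $$ (i,j)) \<longlonglongrightarrow> L$$(i,j)"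
    using lim ij by (intro LIMSEQ_Suc) blast
  moreover have "(\<lambda>m. X (Suc m) $$ (i,j)) \<longlonglongrightarrow>
     c * (\<Sum>g\<in>G. \<Sum>a<D. \<Sum>b<D. P g i a * L $$ (a,b) * Q g b j)"
    unfolding rec[OF ij] using lim by (auto intro!: tendsto_intros)
  ultimately show ?thesis by (rule LIMSEQ_unique)
qed

lemma seq_prod_carrier:
  "(\<forall>g\<in>set gs. f g \<in> carrier_mat D D) \<Longrightarrow> seq_prod D f gs \<in> carrier_mat D D"
  by (induction gs) auto

lemma seq_prod_snoc:
  "(\<forall>g\<in>set gs \<union> {x}. f g \<in> carrier_mat D D) \<Longrightarrow> seq_prod D f (gs @ [x]) = f x * seq_prod D f gs"
proof (induction gs)
  case Nil
  then show ?case by simp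
next
  case (Cons y gs)
  have c: "seq_prod D f gs \<in> carrier_mat D D" using Cons.prems by (intro seq_prod_carrier) auto
  have "seq_prod D f ((y # gs) @ [x]) = (f x * seq_prod D f gs) * f y" using Cons by simp
  also have "\<dots> = f x * (seq_prod D f gs * f y)" using Cons.prems c by (intro assoc_mult_mat) auto
  finally show ?case by simp
qed

lemma seqs_cons: "seqs G (Suc m) = (\<lambda>(g,gs). g # gs) ` (G \<times> seqs G m)"
  unfolding seqs_def by (auto simp: length_Suc_conv image_iff)

lemma seqs_snoc: "seqs G (Suc m) = (\<lambda>(g,gs). gs @ [g]) ` (G \<times> seqs G m)"
proof (intro equalityI subsetI)
  fix xs assume "xs \<in> seqs G (Suc m)"
  then have xs: "set xs \<subseteq> G" "length xs = Suc m" by (auto simp: seqs_def)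
  then have "xs \<noteq> []" by auto
  then have e: "xs = butlast xs @ [last xs]" by simp
  have "last xs \<in> G" using xs \<open>xs \<noteq> []\<close> last_in_set by blast
  moreover have "butlast xs \<in> seqs G m" using xs by (auto simp: seqs_def dest: in_set_butlastD)
  ultimately have "(last xs, butlast xs) \<in> G \<times> seqs G m" by simp
  moreover have "xs = (\<lambda>(g,gs). gs @ [g]) (last xs, butlast xs)" using e by simp
  ultimately show "xs \<in> (\<lambda>(g,gs). gs @ [g]) ` (G \<times> seqs G m)" by (rule rev_image_eqI)
next
  fix xs assume "xs \<in> (\<lambda>(g,gs). gs @ [g]) ` (G \<times> seqs G m)"
  then show "xs \<in> seqs G (Suc m)" by (auto simp: seqs_def)
qed

lemma finite_seqs: "finite G \<Longrightarrow> finite (seqs G m)"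
  unfolding seqs_def by (rule finite_lists_length_eq)

lemma sum_seqs_cons:
  assumes "finite G"
  shows "(\<Sum>x\<in>seqs G (Suc m). f x) = (\<Sum>g\<in>G. \<Sum>gs\<in>seqs G m. f (g # gs))"
proof -
  have "inj_on (\<lambda>(g,gs). g # gs) (G \<times> seqs G m)" by (auto simp: inj_on_def)
  then have "(\<Sum>x\<in>seqs G (Suc m). f x) = (\<Sum>x\<in>G \<times> seqs G m. f (fst x # snd x))"
    unfolding seqs_cons by (subst sum.reindex) (auto simp: case_prod_beta)
  also have "\<dots> = (\<Sum>g\<in>G. \<Sum>gs\<in>seqs G m. f (g # gs))"
    by (simp add: sum.cartesian_product split_beta)
  finally show ?thesis .
qed

lemma sum_seqs_snoc:
  assumes "finite G"
  shows "(\<Sum>x\<in>seqs G (Suc m). f x) = (\<Sum>g\<in>G. \<Sum>gs\<in>seqs G m. f (gs @ [g]))"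
proof -
  have "inj_on (\<lambda>(g,gs). gs @ [g]) (G \<times> seqs G m)" by (auto simp: inj_on_def)
  then have "(\<Sum>x\<in>seqs G (Suc m). f x) = (\<Sum>x\<in>G \<times> seqs G m. f (snd x @ [fst x]))"
    unfolding seqs_snoc by (subst sum.reindex) (auto simp: case_prod_beta)
  also have "\<dots> = (\<Sum>g\<in>G. \<Sum>gs\<in>seqs G m. f (gs @ [g]))"
    by (simp add: sum.cartesian_product split_beta)
  finally show ?thesis .
qed

lemma sum_reindex_sq:
  fixes D :: nat
  shows "(\<Sum>c<D*D. f (c div D) (c mod D)) = (\<Sum>b<D. \<Sum>a<D. f b a :: real)"
proof -
  have "(\<Sum>b<D. \<Sum>a<D. f b a) = (\<Sum>x\<in>{..<D} \<times> {..<D}. f (fst x) (snd x))"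
    by (simp add: sum.cartesian_product split_beta)
  also have "\<dots> = (\<Sum>c<D*D. f (c div D) (c mod D))"
  proof (rule sum.reindex_bij_witness[where i="\<lambda>c. (c div D, c mod D)" and j="\<lambda>(b,a). b*D+a"])
    fix c assume "c \<in> {..<D*D}"
    then show "(\<lambda>(b,a). b*D+a) (c div D, c mod D) = c" by simp
  next
    fix c assume c: "c \<in> {..<D*D}"
    then have "D > 0" by (cases D) auto
    then show "(c div D, c mod D) \<in> {..<D} \<times> {..<D}" using c
      by (auto simp: less_mult_imp_div_less)
  next
    fix x assume "x \<in> {..<D} \<times> {..<D}"
    then obtain b a where x: "x = (b,a)" "a<D" by auto
    then have "(b*D+a) div D = b" "(b*D+a) mod D = a" by auto
    then show "((\<lambda>(b,a). b*D+a) x div D, (\<lambda>(b,a). b*D+a) x mod D) = x" using x by simp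
  next
    fix x assume x: "x \<in> {..<D} \<times> {..<D}"
    then obtain b a where "x = (b,a)" "b<D" "a<D" by auto
    moreover have "b*D+a < D*D"
    proof -
      have "b*D+a < Suc b * D" using \<open>a<D\<close> by simp
      also have "Suc b * D \<le> D*D" using \<open>b<D\<close> by (intro mult_le_mono1) simp
      finally show ?thesis .
    qed
    ultimately show "(\<lambda>(b,a). b*D+a) x \<in> {..<D*D}" by simp
  next
    fix x assume "x \<in> {..<D} \<times> {..<D}"
    then obtain b a where x: "x = (b,a)" "a<D" by auto
    then have "(b*D+a) div D = b" "(b*D+a) mod D = a" by auto
    then show "(\<lambda>c. f (c div D) (c mod D)) ((\<lambda>(b,a). b*D+a) x) = f (fst x) (snd x)" using x by simp
  qed
  finally show ?thesis by simp
qed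

lemma swapl:
  fixes a :: "nat \<Rightarrow> real"
  shows "(\<Sum>c\<in>C. a c * (k * (\<Sum>g\<in>G. x g c * y g c))) = k * (\<Sum>g\<in>G. \<Sum>c\<in>C. x g c * a c * y g c)"
proof -
  have "(\<Sum>c\<in>C. a c * (k * (\<Sum>g\<in>G. x g c * y g c))) = (\<Sum>c\<in>C. k * (\<Sum>g\<in>G. x g c * a c * y g c))"
    by (rule sum.cong[OF refl]) (simp add: sum_distrib_left mult_ac)
  also have "\<dots> = k * (\<Sum>c\<in>C. \<Sum>g\<in>G. x g c * a c * y g c)" by (simp add: sum_distrib_left)
  also have "\<dots> = k * (\<Sum>g\<in>G. \<Sum>c\<in>C. x g c * a c * y g c)" by (simp only: sum.swap[of _ C])
  finally show ?thesis .
qed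
lemma swapr:
  fixes a :: "nat \<Rightarrow> real"
  shows "(\<Sum>c\<in>C. (k * (\<Sum>g\<in>G. x g c * y g c)) * a c) = k * (\<Sum>g\<in>G. \<Sum>c\<in>C. x g c * y g c * a c)"
proof -
  have "(\<Sum>c\<in>C. (k * (\<Sum>g\<in>G. x g c * y g c)) * a c) = (\<Sum>c\<in>C. k * (\<Sum>g\<in>G. x g c * y g c * a c))"
    by (rule sum.cong[OF refl]) (simp add: sum_distrib_left sum_distrib_right mult_ac)
  also have "\<dots> = k * (\<Sum>c\<in>C. \<Sum>g\<in>G. x g c * y g c * a c)" by (simp add: sum_distrib_left)
  also have "\<dots> = k * (\<Sum>g\<in>G. \<Sum>c\<in>C. x g c * y g c * a c)" by (simp only: sum.swap[of _ C])
  finally show ?thesis .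
qed

lemma reorg:
  fixes x :: "'g \<Rightarrow> nat \<Rightarrow> real"
  shows "(\<Sum>gs\<in>S. \<Sum>a<D. \<Sum>b<D. x g a * y gs a b * z g b)
       = (\<Sum>a<D. \<Sum>b<D. x g a * (\<Sum>gs\<in>S. y gs a b) * z g b)"
proof -
  have "(\<Sum>gs\<in>S. \<Sum>a<D. \<Sum>b<D. x g a * y gs a b * z g b)
      = (\<Sum>a<D. \<Sum>gs\<in>S. \<Sum>b<D. x g a * y gs a b * z g b)" by (rule sum.swap)
  also have "\<dots> = (\<Sum>a<D. \<Sum>b<D. \<Sum>gs\<in>S. x g a * y gs a b * z g b)"
    by (rule sum.cong[OF refl], rule sum.swap)
  also have "\<dots> = (\<Sum>a<D. \<Sum>b<D. x g a * (\<Sum>gs\<in>S. y gs a b) * z g b)"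
    by (simp add: sum_distrib_left sum_distrib_right)
  finally show ?thesis .
qed

lemma scal:
  fixes x :: "'g \<Rightarrow> nat \<Rightarrow> real"
  shows "(\<Sum>g\<in>G. \<Sum>a<D. \<Sum>b<D. x g a * (c * K a b) * z g b) = c * (\<Sum>g\<in>G. \<Sum>a<D. \<Sum>b<D. x g a * K a b * z g b)"
  by (simp add: sum_distrib_left mult_ac)

theorem lemma1:
  fixes d :: nat and B :: "nat \<Rightarrow> complex mat"
    and G :: "real mat set" and Gt :: "real mat \<Rightarrow> real mat"
    and p :: real and Ainf Binf :: "real mat"
  assumes "d \<ge> 2"
    and "herm_onb d B"
    and "unitary_channel_group d B G"
    and "unitary_2_design d B G"
    and "\<forall>g\<in>G. \<exists>\<Phi>. cptp d \<Phi> \<and> Gt g = liou d B \<Phi>"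
    and "eigenvalue (T_op d B G Gt) p"
    and "order (complex_of_real p) (char_poly (map_mat complex_of_real (T_op d B G Gt))) = 1"
    and "\<forall>z. eigenvalue (map_mat complex_of_real (T_op d B G Gt)) z \<longrightarrow>
            z \<noteq> complex_of_real p \<longrightarrow> cmod z < p"
    and "mat_tendsto (d*d) (A_m d B G Gt p) Ainf"
    and "mat_tendsto (d*d) (B_m d B G Gt p) Binf"
  shows "vecm_dag (transpose_mat Ainf) * T_op d B G Gt = p \<cdot>\<^sub>m vecm_dag (transpose_mat Ainf)
     \<and> T_op d B G Gt * vecm Binf = p \<cdot>\<^sub>m vecm Binf"
proof -
  define D where "D = d*d"
  define P where "P = Pi_tr d B"
  define N where "N = real (card G)"
  have finG: "finite G" using assms(3) unfolding unitary_channel_group_def by blast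
  have Gc: "\<And>g. g \<in> G \<Longrightarrow> g \<in> carrier_mat D D"
    using assms(3) unfolding unitary_channel_group_def liou_def D_def by auto
  have Gtc: "\<And>g. g \<in> G \<Longrightarrow> Gt g \<in> carrier_mat D D"
    using assms(5) unfolding liou_def D_def by fastforce
  have Pc: "P \<in> carrier_mat D D" unfolding P_def Pi_tr_def liou_def D_def by simp
  have GPc: "\<And>g. g \<in> G \<Longrightarrow> g * P \<in> carrier_mat D D" by (metis Gc Pc mult_carrier_mat)
  have Ac: "Ainf \<in> carrier_mat D D" and Alim: "\<forall>i<D. \<forall>j<D. (\<lambda>m. A_m d B G Gt p m $$ (i,j)) \<longlonglongrightarrow> Ainf $$ (i,j)"
    using assms(9) unfolding mat_tendsto_def D_def by auto
  have Bc: "Binf \<in> carrier_mat D D" and Blim: "\<forall>i<D. \<forall>j<D. (\<lambda>m. B_m d B G Gt p m $$ (i,j)) \<longlonglongrightarrow> Binf $$ (i,j)"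
    using assms(10) unfolding mat_tendsto_def D_def by auto
  have sG: "\<And>gs. gs \<in> seqs G m \<Longrightarrow> set gs \<subseteq> G" for m unfolding seqs_def by auto
  have S1c: "\<And>gs. set gs \<subseteq> G \<Longrightarrow> seq_prod D (\<lambda>g. g * P) gs \<in> carrier_mat D D"
    using GPc by (intro seq_prod_carrier) auto
  have S2c: "\<And>gs. set gs \<subseteq> G \<Longrightarrow> seq_prod D Gt gs \<in> carrier_mat D D"
    using Gtc by (intro seq_prod_carrier) auto
  define FA where "FA gs = transpose_mat (seq_prod D (\<lambda>g. g * P) gs) * P * seq_prod D Gt gs" for gs
  define FB where "FB gs = seq_prod D Gt gs * P * transpose_mat (seq_prod D (\<lambda>g. g * P) gs)" for gs
  have FAc: "\<And>gs. set gs \<subseteq> G \<Longrightarrow> FA gs \<in> carrier_mat D D"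
    unfolding FA_def using S1c S2c Pc by (meson mult_carrier_mat transpose_carrier_mat)
  have FBc: "\<And>gs. set gs \<subseteq> G \<Longrightarrow> FB gs \<in> carrier_mat D D"
    unfolding FB_def using S1c S2c Pc by (meson mult_carrier_mat transpose_carrier_mat)
  have FA_cons: "FA (g # gs) = transpose_mat (g * P) * FA gs * Gt g" if "g \<in> G" "set gs \<subseteq> G" for g gs
  proof -
    have s: "seq_prod D (\<lambda>g. g * P) gs \<in> carrier_mat D D" using S1c that by blast
    have t: "seq_prod D Gt gs \<in> carrier_mat D D" using S2c that by blast
    have gp: "g * P \<in> carrier_mat D D" using GPc that by blast
    have gt: "Gt g \<in> carrier_mat D D" using Gtc that by blast
    have xt: "transpose_mat (g * P) \<in> carrier_mat D D" using gp by simp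
    have st: "transpose_mat (seq_prod D (\<lambda>g. g * P) gs) \<in> carrier_mat D D" using s by simp
    have "FA (g # gs) = transpose_mat (g * P) * transpose_mat (seq_prod D (\<lambda>g. g * P) gs) * P * (seq_prod D Gt gs * Gt g)"
      by (simp add: FA_def transpose_mult[OF s gp] del: assoc_mult_mat)
    also have "\<dots> = transpose_mat (g * P) * (transpose_mat (seq_prod D (\<lambda>g. g * P) gs) * P * seq_prod D Gt gs) * Gt g"
      using xt st Pc t gt by (simp add: assoc_mult_mat[of _ D D _ D _ D])
    finally show ?thesis unfolding FA_def .
  qed
  have FB_snoc: "FB (gs @ [g]) = Gt g * FB gs * transpose_mat (g * P)" if "g \<in> G" "set gs \<subseteq> G" for g gs
  proof -
    have s: "seq_prod D (\<lambda>g. g * P) gs \<in> carrier_mat D D" using S1c that by blast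
    have t: "seq_prod D Gt gs \<in> carrier_mat D D" using S2c that by blast
    have gp: "g * P \<in> carrier_mat D D" using GPc that by blast
    have gt: "Gt g \<in> carrier_mat D D" using Gtc that by blast
    have e1: "seq_prod D (\<lambda>g. g * P) (gs @ [g]) = (g * P) * seq_prod D (\<lambda>g. g * P) gs"
      using GPc that by (intro seq_prod_snoc) auto
    have e2: "seq_prod D Gt (gs @ [g]) = Gt g * seq_prod D Gt gs"
      using Gtc that by (intro seq_prod_snoc) auto
    have xt: "transpose_mat (g * P) \<in> carrier_mat D D" using gp by simp
    have st: "transpose_mat (seq_prod D (\<lambda>g. g * P) gs) \<in> carrier_mat D D" using s by simp
    have "FB (gs @ [g]) = Gt g * seq_prod D Gt gs * P * (transpose_mat (seq_prod D (\<lambda>g. g * P) gs) * transpose_mat (g * P))"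
      by (simp add: FB_def e1 e2 transpose_mult[OF gp s] del: assoc_mult_mat)
    also have "\<dots> = Gt g * (seq_prod D Gt gs * P * transpose_mat (seq_prod D (\<lambda>g. g * P) gs)) * transpose_mat (g * P)"
      using xt st Pc t gt by (simp add: assoc_mult_mat[of _ D D _ D _ D])
    finally show ?thesis unfolding FB_def .
  qed
  define cm where "cm m = 1 / p ^ m * (1 / N ^ m)" for m
  have cmS: "cm (Suc m) = (1/p * (1/N)) * cm m" for m unfolding cm_def by simp
  have Am: "A_m d B G Gt p m $$ (i,j) = cm m * (\<Sum>gs\<in>seqs G m. FA gs $$ (i,j))"
    if "i<D" "j<D" for m i j
    using that unfolding A_m_def expect_seq_def msum_def FA_def D_def N_def P_def cm_def by simp
  have Bm: "B_m d B G Gt p m $$ (i,j) = cm m * (\<Sum>gs\<in>seqs G m. FB gs $$ (i,j))"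
    if "i<D" "j<D" for m i j
    using that unfolding B_m_def expect_seq_def msum_def FB_def D_def N_def P_def cm_def by simp
  have Arec: "A_m d B G Gt p (Suc m) $$ (i,j) = (1/p * (1/N)) * (\<Sum>g\<in>G. \<Sum>a<D. \<Sum>b<D.
       transpose_mat (g * P) $$ (i,a) * A_m d B G Gt p m $$ (a,b) * Gt g $$ (b,j))"
    if "i<D" "j<D" for m i j
  proof -
    have "A_m d B G Gt p (Suc m) $$ (i,j) = cm (Suc m) * (\<Sum>g\<in>G. \<Sum>gs\<in>seqs G m. FA (g#gs) $$ (i,j))"
      by (simp only: Am[OF that] sum_seqs_cons[OF finG, of "\<lambda>gs. FA gs $$ (i,j)"])
    also have "(\<Sum>g\<in>G. \<Sum>gs\<in>seqs G m. FA (g#gs) $$ (i,j)) = (\<Sum>g\<in>G. \<Sum>gs\<in>seqs G m. \<Sum>a<D. \<Sum>b<D.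
        transpose_mat (g * P) $$ (i,a) * FA gs $$ (a,b) * Gt g $$ (b,j))"
    proof (rule sum.cong[OF refl], rule sum.cong[OF refl])
      fix g gs assume g: "g \<in> G" and gs: "gs \<in> seqs G m"
      show "FA (g#gs) $$ (i,j) = (\<Sum>a<D. \<Sum>b<D. transpose_mat (g * P) $$ (i,a) * FA gs $$ (a,b) * Gt g $$ (b,j))"
        unfolding FA_cons[OF g sG[OF gs]]
        by (rule tri_entry) (use g gs GPc FAc Gtc sG that in auto)
    qed
    also have "\<dots> = (\<Sum>g\<in>G. \<Sum>a<D. \<Sum>b<D.
        transpose_mat (g * P) $$ (i,a) * (\<Sum>gs\<in>seqs G m. FA gs $$ (a,b)) * Gt g $$ (b,j))"
      by (rule sum.cong[OF refl], rule reorg)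
    finally have L: "A_m d B G Gt p (Suc m) $$ (i,j) = cm (Suc m) * (\<Sum>g\<in>G. \<Sum>a<D. \<Sum>b<D.
        transpose_mat (g * P) $$ (i,a) * (\<Sum>gs\<in>seqs G m. FA gs $$ (a,b)) * Gt g $$ (b,j))" .
    have "(\<Sum>g\<in>G. \<Sum>a<D. \<Sum>b<D. transpose_mat (g * P) $$ (i,a) * A_m d B G Gt p m $$ (a,b) * Gt g $$ (b,j))
       = (\<Sum>g\<in>G. \<Sum>a<D. \<Sum>b<D. transpose_mat (g * P) $$ (i,a) * (cm m * (\<Sum>gs\<in>seqs G m. FA gs $$ (a,b))) * Gt g $$ (b,j))"
      by (simp add: Am)
    also have "\<dots> = cm m * (\<Sum>g\<in>G. \<Sum>a<D. \<Sum>b<D. transpose_mat (g * P) $$ (i,a) * (\<Sum>gs\<in>seqs G m. FA gs $$ (a,b)) * Gt g $$ (b,j))"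
      by (rule scal)
    finally show ?thesis using L cmS by (simp only: mult.assoc)
  qed
  have Brec: "B_m d B G Gt p (Suc m) $$ (i,j) = (1/p * (1/N)) * (\<Sum>g\<in>G. \<Sum>a<D. \<Sum>b<D.
       Gt g $$ (i,a) * B_m d B G Gt p m $$ (a,b) * transpose_mat (g * P) $$ (b,j))"
    if "i<D" "j<D" for m i j
  proof -
    have "B_m d B G Gt p (Suc m) $$ (i,j) = cm (Suc m) * (\<Sum>g\<in>G. \<Sum>gs\<in>seqs G m. FB (gs @ [g]) $$ (i,j))"
      by (simp only: Bm[OF that] sum_seqs_snoc[OF finG, of "\<lambda>gs. FB gs $$ (i,j)"])
    also have "(\<Sum>g\<in>G. \<Sum>gs\<in>seqs G m. FB (gs @ [g]) $$ (i,j)) = (\<Sum>g\<in>G. \<Sum>gs\<in>seqs G m. \<Sum>a<D. \<Sum>b<D.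
        Gt g $$ (i,a) * FB gs $$ (a,b) * transpose_mat (g * P) $$ (b,j))"
    proof (rule sum.cong[OF refl], rule sum.cong[OF refl])
      fix g gs assume g: "g \<in> G" and gs: "gs \<in> seqs G m"
      show "FB (gs @ [g]) $$ (i,j) = (\<Sum>a<D. \<Sum>b<D. Gt g $$ (i,a) * FB gs $$ (a,b) * transpose_mat (g * P) $$ (b,j))"
        unfolding FB_snoc[OF g sG[OF gs]]
        by (rule tri_entry) (use g gs GPc FBc Gtc sG that in auto)
    qed
    also have "\<dots> = (\<Sum>g\<in>G. \<Sum>a<D. \<Sum>b<D.
        Gt g $$ (i,a) * (\<Sum>gs\<in>seqs G m. FB gs $$ (a,b)) * transpose_mat (g * P) $$ (b,j))"
      by (rule sum.cong[OF refl], rule reorg)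
    finally have L: "B_m d B G Gt p (Suc m) $$ (i,j) = cm (Suc m) * (\<Sum>g\<in>G. \<Sum>a<D. \<Sum>b<D.
        Gt g $$ (i,a) * (\<Sum>gs\<in>seqs G m. FB gs $$ (a,b)) * transpose_mat (g * P) $$ (b,j))" .
    have "(\<Sum>g\<in>G. \<Sum>a<D. \<Sum>b<D. Gt g $$ (i,a) * B_m d B G Gt p m $$ (a,b) * transpose_mat (g * P) $$ (b,j))
       = (\<Sum>g\<in>G. \<Sum>a<D. \<Sum>b<D. Gt g $$ (i,a) * (cm m * (\<Sum>gs\<in>seqs G m. FB gs $$ (a,b))) * transpose_mat (g * P) $$ (b,j))"
      by (simp add: Bm)
    also have "\<dots> = cm m * (\<Sum>g\<in>G. \<Sum>a<D. \<Sum>b<D. Gt g $$ (i,a) * (\<Sum>gs\<in>seqs G m. FB gs $$ (a,b)) * transpose_mat (g * P) $$ (b,j))"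
      by (rule scal)
    finally show ?thesis using L cmS by (simp only: mult.assoc)
  qed
  have Afix: "Ainf $$ (i,j) = (1/p * (1/N)) * (\<Sum>g\<in>G. \<Sum>a<D. \<Sum>b<D.
       transpose_mat (g * P) $$ (i,a) * Ainf $$ (a,b) * Gt g $$ (b,j))" if "i<D" "j<D" for i j
    by (rule fix_rec[where X="A_m d B G Gt p", OF Arec Alim that])
  have Bfix: "Binf $$ (i,j) = (1/p * (1/N)) * (\<Sum>g\<in>G. \<Sum>a<D. \<Sum>b<D.
       Gt g $$ (i,a) * Binf $$ (a,b) * transpose_mat (g * P) $$ (b,j))" if "i<D" "j<D" for i j
    by (rule fix_rec[where X="B_m d B G Gt p", OF Brec Blim that])
  have Tent: "T_op d B G Gt $$ (c,i) = 1/N * (\<Sum>g\<in>G. (g*P)$$(c div D, i div D) * Gt g $$ (c mod D, i mod D))"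
    if "c < D*D" "i < D*D" for c i
  proof -
    have k: "kron (g * P) (Gt g) $$ (c,i) = (g*P)$$(c div D, i div D) * Gt g $$ (c mod D, i mod D)"
      if g: "g \<in> G" for g
      using GPc[OF g] Gtc[OF g] Gc[OF g] Pc \<open>c < D*D\<close> \<open>i < D*D\<close> unfolding kron_def by simp
    have "T_op d B G Gt $$ (c,i) = 1/N * (\<Sum>g\<in>G. kron (g * P) (Gt g) $$ (c,i))"
      using that unfolding T_op_def msum_def N_def P_def D_def by simp
    also have "\<dots> = 1/N * (\<Sum>g\<in>G. (g*P)$$(c div D, i div D) * Gt g $$ (c mod D, i mod D))"
      using k by simp
    finally show ?thesis .
  qed
  have Tc: "T_op d B G Gt \<in> carrier_mat (D*D) (D*D)" unfolding T_op_def msum_def D_def by simp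
  have Dpos: "D > 0" if "c < D*D" for c using that by (cases D) auto
  have dm: "c div D < D" "c mod D < D" if "c < D*D" for c
    using that Dpos[OF that] by (auto simp: less_mult_imp_div_less)
  have vecA: "vecm (transpose_mat Ainf) $$ (c,0) = Ainf $$ (c div D, c mod D)" if "c < D*D" for c
    using that Ac dm[OF that] unfolding vecm_def by simp
  have vecB: "vecm Binf $$ (c,0) = Binf $$ (c mod D, c div D)" if "c < D*D" for c
    using that Bc dm[OF that] unfolding vecm_def by simp
  have gpr: "dim_row (g * P) = D" and gpcl: "dim_col (g * P) = D" if "g \<in> G" for g
    using GPc[OF that] by auto
  have Pdim: "dim_row P = D" "dim_col P = D" using Pc by auto
  have gdim: "dim_row g = D" if "g \<in> G" for g using Gc[OF that] by auto
  have dvA: "vecm (transpose_mat Ainf) \<in> carrier_mat (D*D) 1" using Ac by (simp add: vecm_def)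
  have dvB: "vecm Binf \<in> carrier_mat (D*D) 1" using Bc by (simp add: vecm_def)
  have part1: "vecm_dag (transpose_mat Ainf) * T_op d B G Gt = p \<cdot>\<^sub>m vecm_dag (transpose_mat Ainf)"
  proof (rule eq_matI)
    show "dim_row (vecm_dag (transpose_mat Ainf) * T_op d B G Gt) = dim_row (p \<cdot>\<^sub>m vecm_dag (transpose_mat Ainf))"
      by (simp add: vecm_dag_def)
    show "dim_col (vecm_dag (transpose_mat Ainf) * T_op d B G Gt) = dim_col (p \<cdot>\<^sub>m vecm_dag (transpose_mat Ainf))"
      using Tc dvA by (simp add: vecm_dag_def)
    fix r i assume "r < dim_row (p \<cdot>\<^sub>m vecm_dag (transpose_mat Ainf))"
      "i < dim_col (p \<cdot>\<^sub>m vecm_dag (transpose_mat Ainf))"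
    then have r: "r = 0" and i: "i < D*D" using dvA by (auto simp: vecm_dag_def)
    define S where "S = (\<Sum>g\<in>G. \<Sum>b<D. \<Sum>a<D. (g*P) $$ (b, i div D) * Ainf $$ (b,a) * Gt g $$ (a, i mod D))"
    have "(vecm_dag (transpose_mat Ainf) * T_op d B G Gt) $$ (0,i)
        = (\<Sum>c<D*D. vecm (transpose_mat Ainf) $$ (c,0) * T_op d B G Gt $$ (c,i))"
      using Tc dvA i by (simp add: vecm_dag_def scalar_prod_def lessThan_atLeast0)
    also have "\<dots> = (\<Sum>c<D*D. Ainf $$ (c div D, c mod D) *
        (1/N * (\<Sum>g\<in>G. (g*P)$$(c div D, i div D) * Gt g $$ (c mod D, i mod D))))"
      by (rule sum.cong[OF refl]) (simp add: vecA Tent i)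
    also have "\<dots> = 1/N * (\<Sum>g\<in>G. \<Sum>c<D*D. (g*P)$$(c div D, i div D) * Ainf $$ (c div D, c mod D) * Gt g $$ (c mod D, i mod D))"
      by (rule swapl)
    also have "\<dots> = 1/N * S"
    proof -
      have "(\<Sum>c<D*D. (g*P)$$(c div D, i div D) * Ainf $$ (c div D, c mod D) * Gt g $$ (c mod D, i mod D))
         = (\<Sum>b<D. \<Sum>a<D. (g*P) $$ (b, i div D) * Ainf $$ (b,a) * Gt g $$ (a, i mod D))" for g
        by (rule sum_reindex_sq[where f="\<lambda>b a. (g*P) $$ (b, i div D) * Ainf $$ (b,a) * Gt g $$ (a, i mod D)"])
      then show ?thesis unfolding S_def by (simp only:)
    qed
    finally have L: "(vecm_dag (transpose_mat Ainf) * T_op d B G Gt) $$ (0,i) = 1/N * S" .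
    have "(\<Sum>g\<in>G. \<Sum>a<D. \<Sum>b<D. transpose_mat (g * P) $$ (i div D, a) * Ainf $$ (a,b) * Gt g $$ (b, i mod D)) = S"
      unfolding S_def by (rule sum.cong[OF refl])+ (use dm[OF i] in \<open>simp add: gpr gpcl Pdim gdim\<close>)
    then have fx: "Ainf $$ (i div D, i mod D) = 1/p * (1/N) * S"
      using Afix[OF dm[OF i]] by simp
    have "1/N * S = p * Ainf $$ (i div D, i mod D)"
    proof (cases "p = 0")
      case True
      then have z: "Ainf $$ (x,y) = 0" if "x<D" "y<D" for x y using Afix[OF that] by simp
      have "S = 0" unfolding S_def by (intro sum.neutral ballI) (simp add: z)
      then show ?thesis using True by simp
    next
      case False
      then show ?thesis using fx by simp
    qed
    moreover have "(p \<cdot>\<^sub>m vecm_dag (transpose_mat Ainf)) $$ (0,i) = p * vecm (transpose_mat Ainf) $$ (i,0)"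
      using dvA i by (simp add: vecm_dag_def)
    ultimately show "(vecm_dag (transpose_mat Ainf) * T_op d B G Gt) $$ (r,i) = (p \<cdot>\<^sub>m vecm_dag (transpose_mat Ainf)) $$ (r,i)"
      using L r vecA[OF i] by simp
  qed
  have part2: "T_op d B G Gt * vecm Binf = p \<cdot>\<^sub>m vecm Binf"
  proof (rule eq_matI)
    show "dim_row (T_op d B G Gt * vecm Binf) = dim_row (p \<cdot>\<^sub>m vecm Binf)"
      using Tc dvB by simp
    show "dim_col (T_op d B G Gt * vecm Binf) = dim_col (p \<cdot>\<^sub>m vecm Binf)"
      using Tc dvB by simp
    fix i r assume "i < dim_row (p \<cdot>\<^sub>m vecm Binf)" "r < dim_col (p \<cdot>\<^sub>m vecm Binf)"
    then have r: "r = 0" and i: "i < D*D" using dvB by auto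
    define S where "S = (\<Sum>g\<in>G. \<Sum>b<D. \<Sum>a<D. (g*P) $$ (i div D, b) * Gt g $$ (i mod D, a) * Binf $$ (a,b))"
    have "(T_op d B G Gt * vecm Binf) $$ (i,0) = (\<Sum>c<D*D. T_op d B G Gt $$ (i,c) * vecm Binf $$ (c,0))"
      using Tc dvB i by (simp add: scalar_prod_def lessThan_atLeast0)
    also have "\<dots> = (\<Sum>c<D*D. (1/N * (\<Sum>g\<in>G. (g*P)$$(i div D, c div D) * Gt g $$ (i mod D, c mod D))) *
        Binf $$ (c mod D, c div D))"
      by (rule sum.cong[OF refl]) (simp add: vecB Tent i)
    also have "\<dots> = 1/N * (\<Sum>g\<in>G. \<Sum>c<D*D. (g*P)$$(i div D, c div D) * Gt g $$ (i mod D, c mod D) * Binf $$ (c mod D, c div D))"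
      by (rule swapr)
    also have "\<dots> = 1/N * S"
    proof -
      have "(\<Sum>c<D*D. (g*P)$$(i div D, c div D) * Gt g $$ (i mod D, c mod D) * Binf $$ (c mod D, c div D))
         = (\<Sum>b<D. \<Sum>a<D. (g*P) $$ (i div D, b) * Gt g $$ (i mod D, a) * Binf $$ (a,b))" for g
        by (rule sum_reindex_sq[where f="\<lambda>b a. (g*P) $$ (i div D, b) * Gt g $$ (i mod D, a) * Binf $$ (a,b)"])
      then show ?thesis unfolding S_def by (simp only:)
    qed
    finally have L: "(T_op d B G Gt * vecm Binf) $$ (i,0) = 1/N * S" .
    have "(\<Sum>g\<in>G. \<Sum>a<D. \<Sum>b<D. Gt g $$ (i mod D, a) * Binf $$ (a,b) * transpose_mat (g * P) $$ (b, i div D))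
        = (\<Sum>g\<in>G. \<Sum>a<D. \<Sum>b<D. (g*P) $$ (i div D, b) * Gt g $$ (i mod D, a) * Binf $$ (a,b))"
      by (rule sum.cong[OF refl])+ (use dm[OF i] in \<open>simp add: gpr gpcl Pdim gdim mult_ac\<close>)
    also have "\<dots> = S" unfolding S_def by (rule sum.cong[OF refl], rule sum.swap)
    finally have "(\<Sum>g\<in>G. \<Sum>a<D. \<Sum>b<D. Gt g $$ (i mod D, a) * Binf $$ (a,b) * transpose_mat (g * P) $$ (b, i div D)) = S" .
    then have fx: "Binf $$ (i mod D, i div D) = 1/p * (1/N) * S"
      using Bfix[OF dm(2)[OF i] dm(1)[OF i]] by simp
    have "1/N * S = p * Binf $$ (i mod D, i div D)"
    proof (cases "p = 0")
      case True
      then have z: "Binf $$ (x,y) = 0" if "x<D" "y<D" for x y using Bfix[OF that] by simp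
      have "S = 0" unfolding S_def by (intro sum.neutral ballI) (simp add: z)
      then show ?thesis using True by simp
    next
      case False
      then show ?thesis using fx by simp
    qed
    moreover have "(p \<cdot>\<^sub>m vecm Binf) $$ (i,0) = p * vecm Binf $$ (i,0)"
      using dvB i by simp
    ultimately show "(T_op d B G Gt * vecm Binf) $$ (i,r) = (p \<cdot>\<^sub>m vecm Binf) $$ (i,r)"
      using L r vecB[OF i] by simp
  qed
  show ?thesis using part1 part2 by blast
qed

end
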